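(* Let $V$ be an $N$-dimensional vector space over $\mathbb{F}_q$ and $\mathcal{F},\mathcal{G}\subset V$ spanning families with extended families $\overline{\mathcal{F}},\overline{\mathcal{G}}$. If there is a matroid isomorphism $\psi:\overline{\mathcal{F}}\to\overline{\mathcal{G}}$ with $\psi(\mathcal{F})=\mathcal{G}$, then $|S^{\mathcal{F}}_t(0)|=|S^{\mathcal{G}}_t(0)|$ for every $t\in\mathbb{N}$.
   Context: A spanning family is a set of pairwise linearly independent nonzero vectors spanning $V$; $\operatorname{wt}_{\mathcal{F}}(v)=\min\{|I|:I\subseteq\mathcal{F},v\in\langle I\rangle\}$ and $S^{\mathcal{F}}_t(0)=\{v\in V:\operatorname{wt}_{\mathcal{F}}(v)=t\}$. A hyperplane generated by vectors in $\mathcal{F}$ is the span of $N-1$ linearly independent vectors of $\mathcal{F}$; the extended family $\overline{\mathcal{F}}$ is the set of vectors $v$ (one representative per line) such that $\langle v\rangle$ is an intersection of hyperplanes generated by vectors in $\mathcal{F}$ (one has $\mathcal{F}\subseteq\overline{\mathcal{F}}$). The matroid of a set of vectors has that set as ground set and its linearly independent subsets as independent sets; a matroid isomorphism $\psi:\overline{\mathcal{F}}\to\overline{\mathcal{G}}$ is a bijection such that a subset $I\subseteq\overline{\mathcal{F}}$ is linearly independent iff $\psi(I)$ is. *)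

theory Defs
  imports "HOL.Vector_Spaces"
begin

definition lin_indep :: "('a::field \<Rightarrow> 'v::ab_group_add \<Rightarrow> 'v) \<Rightarrow> 'v set \<Rightarrow> bool" where
  "lin_indep scale I \<longleftrightarrow> \<not> module.dependent scale I"

definition spanning_family :: "('a::field \<Rightarrow> 'v::ab_group_add \<Rightarrow> 'v) \<Rightarrow> 'v set \<Rightarrow> bool" where
  "spanning_family scale F \<longleftrightarrow>
     0 \<notin> F \<and>
     (\<forall>u\<in>F. \<forall>v\<in>F. u \<noteq> v \<longrightarrow> lin_indep scale {u, v}) \<and>
     module.span scale F = UNIV"

definition wt :: "('a::field \<Rightarrow> 'v::ab_group_add \<Rightarrow> 'v) \<Rightarrow> 'v set \<Rightarrow> 'v \<Rightarrow> nat" where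
  "wt scale F v = (LEAST n. \<exists>I. I \<subseteq> F \<and> finite I \<and> card I = n \<and> v \<in> module.span scale I)"

definition sphere0 :: "('a::field \<Rightarrow> 'v::ab_group_add \<Rightarrow> 'v) \<Rightarrow> 'v set \<Rightarrow> nat \<Rightarrow> 'v set" where
  "sphere0 scale F t = {v. wt scale F v = t}"

definition gen_hyperplanes :: "('a::field \<Rightarrow> 'v::ab_group_add \<Rightarrow> 'v) \<Rightarrow> nat \<Rightarrow> 'v set \<Rightarrow> 'v set set" where
  "gen_hyperplanes scale N F =
     {module.span scale B | B. B \<subseteq> F \<and> finite B \<and> card B = N - 1 \<and> lin_indep scale B}"

definition extended_line :: "('a::field \<Rightarrow> 'v::ab_group_add \<Rightarrow> 'v) \<Rightarrow> nat \<Rightarrow> 'v set \<Rightarrow> 'v \<Rightarrow> bool" where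
  "extended_line scale N F v \<longleftrightarrow>
     v \<noteq> 0 \<and> (\<exists>\<H>. \<H> \<subseteq> gen_hyperplanes scale N F \<and> module.span scale {v} = \<Inter>\<H>)"

definition is_extended_family :: "('a::field \<Rightarrow> 'v::ab_group_add \<Rightarrow> 'v) \<Rightarrow> nat \<Rightarrow> 'v set \<Rightarrow> 'v set \<Rightarrow> bool" where
  "is_extended_family scale N F Fb \<longleftrightarrow>
     F \<subseteq> Fb \<and>
     (\<forall>v\<in>Fb. extended_line scale N F v) \<and>
     (\<forall>u\<in>Fb. \<forall>v\<in>Fb. u \<noteq> v \<longrightarrow> module.span scale {u} \<noteq> module.span scale {v}) \<and>
     (\<forall>v. extended_line scale N F v \<longrightarrow> (\<exists>u\<in>Fb. module.span scale {u} = module.span scale {v}))"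

definition matroid_iso :: "('a::field \<Rightarrow> 'v::ab_group_add \<Rightarrow> 'v) \<Rightarrow> ('v \<Rightarrow> 'v) \<Rightarrow> 'v set \<Rightarrow> 'v set \<Rightarrow> bool" where
  "matroid_iso scale \<psi> Fb Gb \<longleftrightarrow>
     bij_betw \<psi> Fb Gb \<and> (\<forall>I\<subseteq>Fb. lin_indep scale I \<longleftrightarrow> lin_indep scale (\<psi> ` I))"

end

theory Submission
  imports Defs
begin


context vector_space begin

lemma card_span_indep:
  assumes fa: "finite (UNIV::'a set)"
  shows "finite S \<Longrightarrow> independent S \<Longrightarrow> finite (span S) \<and> card (span S) = card (UNIV::'a set) ^ card S"
proof (induction S rule: finite_induct)
  case empty
  then show ?case by simp
next
  case (insert x S)
  have iS: "independent S" and xS: "x \<notin> span S"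
    using insert.prems insert.hyps(2) by (auto simp: independent_insert)
  from insert.IH[OF iS] have fS: "finite (span S)" and cS: "card (span S) = card (UNIV::'a set) ^ card S" by auto
  have eq: "span (insert x S) = (\<lambda>(k,y). scale k x + y) ` (UNIV \<times> span S)"
  proof (rule set_eqI)
    fix z
    show "z \<in> span (insert x S) \<longleftrightarrow> z \<in> (\<lambda>(k,y). scale k x + y) ` (UNIV \<times> span S)"
      unfolding span_breakdown_eq
    proof
      assume "\<exists>k. z - scale k x \<in> span S"
      then obtain k where "z - scale k x \<in> span S" by blast
      thus "z \<in> (\<lambda>(k,y). scale k x + y) ` (UNIV \<times> span S)"
        by (auto simp: image_iff intro!: exI[where x=k] bexI[where x="z - scale k x"])
    next
      assume "z \<in> (\<lambda>(k,y). scale k x + y) ` (UNIV \<times> span S)"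
      then obtain k y where "y \<in> span S" "z = scale k x + y" by auto
      thus "\<exists>k. z - scale k x \<in> span S" by (intro exI[where x=k]) simp
    qed
  qed
  have inj: "inj_on (\<lambda>(k,y). scale k x + y) (UNIV \<times> span S)"
  proof (rule inj_onI, clarify)
    fix k y k' y'
    assume y: "y \<in> span S" and y': "y' \<in> span S" and e: "scale k x + y = scale k' x + y'"
    have "scale (k - k') x = y' - y" using e by (simp add: scale_left_diff_distrib algebra_simps)
    hence "scale (k - k') x \<in> span S" using y y' by (simp add: span_diff)
    hence "k = k'"
    proof (rule contrapos_pp)
      assume "k \<noteq> k'"
      hence "x = scale (inverse (k - k')) (scale (k - k') x)" by simp
      thus "scale (k - k') x \<notin> span S" using xS span_scale by metis
    qed
    thus "k = k' \<and> y = y'" using e by simp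
  qed
  have "finite (span (insert x S))" unfolding eq using fa fS by simp
  moreover have "card (span (insert x S)) = card (UNIV::'a set) * card (span S)"
    unfolding eq using card_image[OF inj] card_cartesian_product by simp
  ultimately show ?case using cS insert.hyps by simp
qed

lemma span_inter_delete:
  assumes B: "independent B" "finite B" and J: "J \<subseteq> B" and x: "x \<in> span B"
    and h: "\<And>b. b \<in> B - J \<Longrightarrow> x \<in> span (B - {b})"
  shows "x \<in> span J"
proof -
  have r0: "representation B x b = 0" if "b \<in> B - J" for b
  proof -
    have "representation B x = representation (B - {b}) x"
      by (rule representation_extend[OF B(1) h[OF that]]) auto
    thus ?thesis using representation_ne_zero[of "B - {b}" x b] by auto
  qed
  have "x = (\<Sum>b\<in>B. scale (representation B x b) b)"
    using sum_representation_eq[OF B(1) x B(2) order_refl] by simp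
  also have "\<dots> = (\<Sum>b\<in>J. scale (representation B x b) b)"
    using r0 J B(2) by (intro sum.mono_neutral_right) auto
  also have "\<dots> \<in> span J" by (intro span_sum span_scale span_base)
  finally show ?thesis .
qed

lemma iso_span:
  assumes iso: "matroid_iso scale \<psi> A B" and S: "S \<subseteq> A" and xA: "x \<in> A" and x: "x \<in> span S"
  shows "\<psi> x \<in> span (\<psi> ` S)"
proof -
  obtain J where J: "J \<subseteq> S" "independent J" "S \<subseteq> span J"
    using maximal_independent_subset[of S] by blast
  have bij: "bij_betw \<psi> A B" and ind: "\<And>I. I \<subseteq> A \<Longrightarrow> lin_indep scale I \<longleftrightarrow> lin_indep scale (\<psi> ` I)"
    using iso unfolding matroid_iso_def by auto
  have xJ: "x \<in> span J" using x J(3) span_mono span_span by (metis subset_iff span_minimal subspace_span)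
  show ?thesis
  proof (cases "x \<in> J")
    case True then show ?thesis using J(1) by (blast intro: span_base)
  next
    case False
    have dep: "dependent (insert x J)" using False xJ independent_insert[of x J] by simp
    have "dependent (\<psi> ` insert x J)"
      using ind[of "insert x J"] dep J(1) S xA unfolding lin_indep_def by auto
    moreover have iJ: "independent (\<psi> ` J)"
      using ind[of J] J S unfolding lin_indep_def by auto
    moreover have "\<psi> x \<notin> \<psi> ` J"
      using False bij J(1) S xA unfolding bij_betw_def inj_on_def by blast
    ultimately have "\<psi> x \<in> span (\<psi> ` J)" using independent_insert[of "\<psi> x" "\<psi> ` J"] by simp
    thus ?thesis using span_mono[of "\<psi> ` J" "\<psi> ` S"] J(1) by blast
  qed
qed

lemma iso_inv:
  assumes iso: "matroid_iso scale \<psi> A B"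
  shows "matroid_iso scale (inv_into A \<psi>) B A"
proof -
  have bij: "bij_betw \<psi> A B" and ind: "\<And>I. I \<subseteq> A \<Longrightarrow> lin_indep scale I \<longleftrightarrow> lin_indep scale (\<psi> ` I)"
    using iso unfolding matroid_iso_def by auto
  have b2: "bij_betw (inv_into A \<psi>) B A" by (rule bij_betw_inv_into[OF bij])
  have "lin_indep scale I \<longleftrightarrow> lin_indep scale (inv_into A \<psi> ` I)" if "I \<subseteq> B" for I
  proof -
    have sub: "inv_into A \<psi> ` I \<subseteq> A" using b2 that by (auto simp: bij_betw_def)
    have "\<psi> ` (inv_into A \<psi> ` I) = I" using bij that
      by (auto simp: bij_betw_def image_image f_inv_into_f image_iff) (metis f_inv_into_f subsetD)
    thus ?thesis using ind[OF sub] by simp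
  qed
  thus ?thesis using b2 unfolding matroid_iso_def by auto
qed

end


locale xs = finite_dimensional_vector_space scale Basis
  for scale :: "'a::{field,finite} \<Rightarrow> 'v::ab_group_add \<Rightarrow> 'v" and Basis :: "'v set" +
  fixes N :: nat and F Fb :: "'v set"
  assumes cardB: "card Basis = N"
  and sf: "spanning_family scale F"
  and ef: "is_extended_family scale N F Fb"
begin

lemma finV: "finite (UNIV::'v set)"
  using card_span_indep[OF _ finite_Basis independent_Basis] span_Basis by simp

lemma dimU: "dim (UNIV::'v set) = N" using cardB by simp

lemma spanF: "span F = UNIV" using sf unfolding spanning_family_def by simp

lemma hyp_iff: "H \<in> gen_hyperplanes scale N F \<longleftrightarrow>
   (\<exists>B. B \<subseteq> F \<and> finite B \<and> card B = N - 1 \<and> independent B \<and> H = span B)"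
  unfolding gen_hyperplanes_def lin_indep_def by auto

lemma hyp_subspace: "H \<in> gen_hyperplanes scale N F \<Longrightarrow> subspace H"
  unfolding hyp_iff by auto

lemma basis_in_F:
  assumes "J \<subseteq> F" "independent J"
  obtains B where "J \<subseteq> B" "B \<subseteq> F" "independent B" "span B = UNIV" "finite B" "card B = N"
proof -
  obtain B where B: "J \<subseteq> B" "B \<subseteq> F" "independent B" "F \<subseteq> span B"
    using maximal_independent_subset_extend[OF assms] by blast
  have sp: "span B = UNIV" using B(4) spanF
    by (metis span_minimal subspace_span top.extremum_uniqueI)
  have "finite B" using B(3) finiteI_independent by blast
  moreover have "card B = N" using basis_card_eq_dim[of B UNIV] B(3) sp dimU by simp
  ultimately show ?thesis using that B sp by blast
qed

lemma hyp_delete: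
  assumes "B \<subseteq> F" "independent B" "finite B" "card B = N" "b \<in> B"
  shows "span (B - {b}) \<in> gen_hyperplanes scale N F"
  unfolding hyp_iff
  using assms by (intro exI[where x="B - {b}"]) (auto intro: dependent_mono)

lemma hyp_avoid:
  assumes "x \<noteq> 0" shows "\<exists>H\<in>gen_hyperplanes scale N F. x \<notin> H"
proof -
  obtain B where B: "B \<subseteq> F" "independent B" "span B = UNIV" "finite B" "card B = N"
    by (metis basis_in_F empty_subsetI independent_empty)
  have "\<exists>b\<in>B - {}. x \<notin> span (B - {b})"
  proof (rule ccontr)
    assume "\<not> ?thesis"
    hence "x \<in> span {}" using span_inter_delete[OF B(2) B(4), of "{}" x] B(3) by auto
    thus False using assms by simp
  qed
  then obtain b where b: "b \<in> B" "x \<notin> span (B - {b})" by auto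
  have "span (B - {b}) \<in> gen_hyperplanes scale N F"
    using hyp_delete B b by blast
  thus ?thesis using b by blast
qed

lemma span_is_inter:
  assumes "I \<subseteq> F" shows "\<exists>\<H>. \<H> \<subseteq> gen_hyperplanes scale N F \<and> span I = \<Inter>\<H>"
proof -
  obtain J where J: "J \<subseteq> I" "independent J" "I \<subseteq> span J"
    using maximal_independent_subset[of I] by blast
  have sIJ: "span I = span J"
    using J by (metis span_mono span_minimal subspace_span subset_antisym)
  obtain B where B: "J \<subseteq> B" "B \<subseteq> F" "independent B" "span B = UNIV" "finite B" "card B = N"
    using basis_in_F[of J] J assms by blast
  define \<H> where "\<H> = (\<lambda>b. span (B - {b})) ` (B - J)"
  have "\<H> \<subseteq> gen_hyperplanes scale N F"
    unfolding \<H>_def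
  proof (rule image_subsetI)
    fix b assume "b \<in> B - J"
    thus "span (B - {b}) \<in> gen_hyperplanes scale N F"
      using hyp_delete[OF B(2) B(3) B(5) B(6)] by blast
  qed
  moreover have "span I = \<Inter>\<H>"
  proof
    show "span I \<subseteq> \<Inter>\<H>" unfolding sIJ \<H>_def
    proof (rule Inter_greatest)
      fix X assume "X \<in> (\<lambda>b. span (B - {b})) ` (B - J)"
      then obtain b where "b \<in> B - J" "X = span (B - {b})" by blast
      thus "span J \<subseteq> X" using B(1) by (metis Diff_iff insert_iff span_mono subset_Diff_insert Diff_empty subsetI subset_iff)
    qed
    show "\<Inter>\<H> \<subseteq> span I" unfolding sIJ
    proof
      fix x assume x: "x \<in> \<Inter>\<H>"
      have "\<And>b. b \<in> B - J \<Longrightarrow> x \<in> span (B - {b})" using x unfolding \<H>_def by blast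
      thus "x \<in> span J" using span_inter_delete[OF B(3) B(5) B(1)] B(4) by blast
    qed
  qed
  ultimately show ?thesis by blast
qed

lemma lines_span_aux:
  "\<forall>\<H>. \<H> \<subseteq> gen_hyperplanes scale N F \<longrightarrow> dim (\<Inter>\<H>) = d \<longrightarrow> \<Inter>\<H> \<subseteq> span (Fb \<inter> \<Inter>\<H>)"
proof (induction d rule: less_induct)
  case (less d)
  show ?case
  proof (intro allI impI)
    fix \<H> assume H: "\<H> \<subseteq> gen_hyperplanes scale N F" and d: "dim (\<Inter>\<H>) = d"
    define W where "W = \<Inter>\<H>"
    have sW: "subspace W" unfolding W_def using H hyp_subspace by (auto intro!: subspace_Inter)
    define U where "U = span (Fb \<inter> W)"
    have UW: "U \<subseteq> W" unfolding U_def using sW span_minimal[of "Fb \<inter> W" W] by auto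
    have sU: "subspace U" unfolding U_def by simp
    show "\<Inter>\<H> \<subseteq> span (Fb \<inter> \<Inter>\<H>)"
    proof (cases "d = 0")
      case True
      then show ?thesis using d by (auto simp: span_zero)
    next
      case d0: False
      show ?thesis
      proof (cases "d = 1")
        case True
        obtain Bw where Bw: "finite Bw" "Bw \<subseteq> W" "independent Bw" "span Bw = W" "card Bw = dim W"
          using basis_subspace_exists[OF sW] by blast
        then obtain w where w: "Bw = {w}" using True d W_def by (auto simp: card_Suc_eq)
        have w0: "w \<noteq> 0" using Bw(3) w by simp
        have "extended_line scale N F w"
          unfolding extended_line_def using w0 H Bw(4) w W_def by auto
        then obtain u where u: "u \<in> Fb" "span {u} = span {w}"
          using ef unfolding is_extended_family_def by blast
        have "u \<in> W" using u(2) Bw(4) w span_base[of u "{u}"] by auto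
        hence "W \<subseteq> U" unfolding U_def using u Bw(4) w
          by (metis Int_iff span_mono empty_subsetI insert_subset)
        thus ?thesis unfolding W_def U_def by simp
      next
        case False
        hence d2: "d \<ge> 2" using d0 by simp
        show ?thesis
        proof (rule ccontr)
          assume nWU: "\<not> ?thesis"
          have "\<not> W \<subseteq> U" using nWU unfolding U_def W_def .
          hence WU: "U \<noteq> W" by blast
          have e1: "span U = U" "span W = W" using sU sW by simp_all
          have "span U \<subset> span W" unfolding e1 using UW WU by (rule psubsetI)
          hence dU: "dim U < d" using dim_psubset[of U W] d W_def by auto
          have key: "W \<inter> H' = U" if H': "H' \<in> gen_hyperplanes scale N F" "\<not> W \<subseteq> H'" for H'
          proof -
            define W' where "W' = W \<inter> H'"
            have W'eq: "W' = \<Inter>(insert H' \<H>)" unfolding W'_def W_def by auto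
            have sW': "subspace W'" unfolding W'_def using sW hyp_subspace[OF H'(1)] by (rule subspace_inter)
            have e2: "span W' = W'" "span W = W" using sW' sW by simp_all
            have "W' \<subseteq> W" "W' \<noteq> W" using H'(2) unfolding W'_def by auto
            hence "span W' \<subset> span W" unfolding e2 by (rule psubsetI)
            hence dW': "dim W' < d" using dim_psubset[of W' W] d W_def by auto
            have "insert H' \<H> \<subseteq> gen_hyperplanes scale N F" using H H'(1) by blast
            hence "W' \<subseteq> span (Fb \<inter> W')"
              using less.IH[OF dW'] W'eq by metis
            hence W'U: "W' \<subseteq> U" unfolding U_def W'_def by (meson Int_mono order_refl span_mono subset_trans Int_lower1)
            obtain w where w: "w \<in> W" "w \<notin> H'" using H'(2) by auto
            obtain B' where B': "B' \<subseteq> F" "finite B'" "card B' = N - 1" "independent B'" "H' = span B'"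
              using H'(1) unfolding hyp_iff by blast
            have N1: "N \<ge> 1"
            proof (rule ccontr)
              assume "\<not> N \<ge> 1"
              hence "dim (UNIV::'v set) = 0" using dimU by simp
              hence "(UNIV::'v set) \<subseteq> {0}" using dim_eq_0 by blast
              hence "w = 0" by blast
              thus False using w B'(5) span_zero by auto
            qed
            have "independent (insert w B')" using w B' independent_insertI[of w B'] by blast
            moreover have "card (insert w B') = dim (UNIV::'v set)"
              using B' w N1 dimU span_base by (subst card_insert_disjoint) auto
            ultimately have spU: "span (insert w B') = UNIV"
              using card_eq_dim[of "insert w B'" UNIV] B' by auto
            have "W \<subseteq> span (insert w W')"
            proof
              fix y assume y: "y \<in> W"
              have "y \<in> span (insert w B')" using spU by simp
              then obtain k where k: "y - scale k w \<in> span B'" unfolding span_breakdown_eq by blast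
              have "y - scale k w \<in> W" using y w sW by (auto intro: subspace_diff subspace_scale)
              hence "y - scale k w \<in> W'" using k B'(5) unfolding W'_def by auto
              hence "y - scale k w \<in> span W'" by (rule span_base)
              thus "y \<in> span (insert w W')" unfolding span_breakdown_eq by blast
            qed
            hence "dim W \<le> dim (insert w W')" by (rule dim_mono)
            also have "\<dots> \<le> dim W' + 1" by (simp add: dim_insert)
            finally have "dim W' \<ge> d - 1" using d W_def by simp
            hence "dim W' \<ge> dim U" using dU by simp
            thus ?thesis using subspace_dim_equal[OF sW' sU W'U] unfolding W'_def by simp
          qed
          have "W \<noteq> {0}"
          proof
            assume "W = {0}"
            hence "dim W = 0" by simp
            thus False using d d2 W_def by simp
          qed
          moreover have "0 \<in> W" using sW by (rule subspace_0)
          ultimately obtain x where x: "x \<in> W" "x \<noteq> 0" by blast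
          then obtain H0 where H0: "H0 \<in> gen_hyperplanes scale N F" "x \<notin> H0" using hyp_avoid by blast
          have nWH0: "\<not> W \<subseteq> H0" using x H0 by auto
          have "dim U \<ge> 1"
          proof -
            have "W \<subseteq> span (insert x U)"
            proof -
              have "W \<inter> H0 = U" using key[OF H0(1) nWH0] .
              obtain B' where B': "B' \<subseteq> F" "finite B'" "card B' = N - 1" "independent B'" "H0 = span B'"
                using H0(1) unfolding hyp_iff by blast
              have N1: "N \<ge> 1"
              proof (rule ccontr)
                assume "\<not> N \<ge> 1"
                hence "dim (UNIV::'v set) = 0" using dimU by simp
                hence "(UNIV::'v set) \<subseteq> {0}" using dim_eq_0 by blast
                thus False using x by auto
              qed
              have "independent (insert x B')" using H0 B' independent_insertI[of x B'] by blast
              moreover have "card (insert x B') = dim (UNIV::'v set)"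
                using B' H0 N1 dimU span_base by (subst card_insert_disjoint) auto
              ultimately have spU: "span (insert x B') = UNIV"
                using card_eq_dim[of "insert x B'" UNIV] B' by auto
              show ?thesis
              proof
                fix y assume y: "y \<in> W"
                have "y \<in> span (insert x B')" using spU by simp
                then obtain k where k: "y - scale k x \<in> span B'" unfolding span_breakdown_eq by blast
                have "y - scale k x \<in> W" using y x sW by (auto intro: subspace_diff subspace_scale)
                hence "y - scale k x \<in> U" using k B'(5) \<open>W \<inter> H0 = U\<close> by auto
                hence "y - scale k x \<in> span U" by (rule span_base)
                thus "y \<in> span (insert x U)" unfolding span_breakdown_eq by blast
              qed
            qed
            hence "dim W \<le> dim (insert x U)" by (rule dim_mono)
            also have "\<dots> \<le> dim U + 1" by (simp add: dim_insert)
            finally show ?thesis using d d2 W_def by simp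
          qed
          have "\<not> U \<subseteq> {0}"
          proof
            assume "U \<subseteq> {0}"
            hence "dim U = 0" by (metis dim_eq_0)
            thus False using \<open>dim U \<ge> 1\<close> by linarith
          qed
          then obtain u where u: "u \<in> U" "u \<noteq> 0" by blast
          then obtain H1 where H1: "H1 \<in> gen_hyperplanes scale N F" "u \<notin> H1" using hyp_avoid by blast
          show False
          proof (cases "W \<subseteq> H1")
            case True thus False using u UW H1 by auto
          next
            case False thus False using key[OF H1(1) False] u H1 by auto
          qed
        qed
      qed
    qed
  qed
qed

lemma lines_span: "\<H> \<subseteq> gen_hyperplanes scale N F \<Longrightarrow> \<Inter>\<H> \<subseteq> span (Fb \<inter> \<Inter>\<H>)"
  using lines_span_aux by blast

end


context xs begin

definition Tv where "Tv v = Fb \<inter> \<Inter>(span ` {I. I \<subseteq> F \<and> v \<in> span I})"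
definition Lat where "Lat = {Fb \<inter> \<Inter>(span ` \<I>) | \<I>. \<I> \<subseteq> Pow F}"
definition wT where "wT T = (LEAST n. \<exists>I. I \<subseteq> F \<and> finite I \<and> card I = n \<and> T \<subseteq> span I)"

lemma Tv_span: "v \<in> span (Tv v)"
proof -
  define \<I> where "\<I> = {I. I \<subseteq> F \<and> v \<in> span I}"
  have "\<forall>I\<in>\<I>. \<exists>\<H>. \<H> \<subseteq> gen_hyperplanes scale N F \<and> span I = \<Inter>\<H>"
    unfolding \<I>_def using span_is_inter by blast
  then obtain hs where hs0: "\<forall>I\<in>\<I>. hs I \<subseteq> gen_hyperplanes scale N F \<and> span I = \<Inter>(hs I)"
    by (rule bchoice[THEN exE])
  hence hs: "\<And>I. I \<in> \<I> \<Longrightarrow> hs I \<subseteq> gen_hyperplanes scale N F \<and> span I = \<Inter>(hs I)" by blast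
  define \<H> where "\<H> = \<Union>(hs ` \<I>)"
  have H: "\<H> \<subseteq> gen_hyperplanes scale N F" unfolding \<H>_def using hs by blast
  have eq: "\<Inter>(span ` \<I>) = \<Inter>\<H>"
  proof
    show "\<Inter>(span ` \<I>) \<subseteq> \<Inter>\<H>"
    proof (rule Inter_greatest)
      fix X assume "X \<in> \<H>"
      then obtain I where I: "I \<in> \<I>" "X \<in> hs I" unfolding \<H>_def by blast
      have "\<Inter>(span ` \<I>) \<subseteq> span I" using I(1) by blast
      also have "\<dots> = \<Inter>(hs I)" using hs[OF I(1)] by blast
      also have "\<dots> \<subseteq> X" using I(2) by blast
      finally show "\<Inter>(span ` \<I>) \<subseteq> X" .
    qed
    show "\<Inter>\<H> \<subseteq> \<Inter>(span ` \<I>)"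
    proof (rule Inter_greatest)
      fix X assume "X \<in> span ` \<I>"
      then obtain I where I: "I \<in> \<I>" "X = span I" by blast
      have "\<Inter>\<H> \<subseteq> \<Inter>(hs I)" unfolding \<H>_def using I(1) by blast
      thus "\<Inter>\<H> \<subseteq> X" using hs[OF I(1)] I(2) by simp
    qed
  qed
  have "v \<in> \<Inter>(span ` \<I>)" unfolding \<I>_def by auto
  hence "v \<in> \<Inter>\<H>" using eq by simp
  hence "v \<in> span (Fb \<inter> \<Inter>\<H>)" using lines_span[OF H] by blast
  thus ?thesis unfolding Tv_def \<I>_def[symmetric] eq .
qed

lemma finFb: "finite Fb" using finV by (rule finite_subset[rotated]) simp

lemma Lat_sub: "T \<in> Lat \<Longrightarrow> T \<subseteq> Fb" unfolding Lat_def by auto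

lemma finLat: "finite Lat"
  by (rule finite_subset[of _ "Pow Fb"]) (use Lat_sub finFb in auto)

lemma Tv_Lat: "Tv v \<in> Lat" unfolding Lat_def Tv_def by blast

lemma span_iff_F: "I \<subseteq> F \<Longrightarrow> v \<in> span I \<longleftrightarrow> Tv v \<subseteq> span I"
proof
  assume "I \<subseteq> F" "v \<in> span I"
  thus "Tv v \<subseteq> span I" unfolding Tv_def by blast
next
  assume "Tv v \<subseteq> span I"
  hence "span (Tv v) \<subseteq> span I" by (metis span_minimal subspace_span)
  thus "v \<in> span I" using Tv_span by blast
qed

lemma span_iff_Lat:
  assumes "T \<in> Lat" shows "v \<in> span T \<longleftrightarrow> Tv v \<subseteq> T"
proof
  assume v: "v \<in> span T"
  obtain \<I> where I: "\<I> \<subseteq> Pow F" "T = Fb \<inter> \<Inter>(span ` \<I>)" using assms unfolding Lat_def by blast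
  have "I \<in> {I. I \<subseteq> F \<and> v \<in> span I}" if "I \<in> \<I>" for I
  proof -
    have "T \<subseteq> span I" using I that by blast
    hence "span T \<subseteq> span I" by (metis span_minimal subspace_span)
    thus ?thesis using v I that by blast
  qed
  thus "Tv v \<subseteq> T" unfolding Tv_def I(2) by blast
next
  assume "Tv v \<subseteq> T"
  hence "span (Tv v) \<subseteq> span T" by (rule span_mono)
  thus "v \<in> span T" using Tv_span by blast
qed

lemma wt_eq: "wt scale F v = wT (Tv v)"
proof -
  have "\<And>n. (\<exists>I. I \<subseteq> F \<and> finite I \<and> card I = n \<and> v \<in> span I) =
     (\<exists>I. I \<subseteq> F \<and> finite I \<and> card I = n \<and> Tv v \<subseteq> span I)"
    using span_iff_F by blast
  thus ?thesis unfolding wt_def wT_def by simp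
qed

lemma card_span_Lat:
  assumes T: "T \<in> Lat"
  shows "card (span T) = (\<Sum>T'\<in>{T'\<in>Lat. T' \<subseteq> T}. card {v. Tv v = T'})"
proof -
  have eq: "span T = (\<Union>T'\<in>{T'\<in>Lat. T' \<subseteq> T}. {v. Tv v = T'})"
    using span_iff_Lat[OF T] Tv_Lat by auto
  show ?thesis unfolding eq
    by (rule card_UN_disjoint) (use finLat finite_subset[OF subset_UNIV finV] in \<open>simp_all, blast\<close>)
qed

lemma card_sphere:
  "card (sphere0 scale F t) = (\<Sum>T\<in>{T\<in>Lat. wT T = t}. card {v. Tv v = T})"
proof -
  have eq: "sphere0 scale F t = (\<Union>T\<in>{T\<in>Lat. wT T = t}. {v. Tv v = T})"
    unfolding sphere0_def wt_eq using Tv_Lat by auto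
  show ?thesis unfolding eq
    by (rule card_UN_disjoint) (use finLat finite_subset[OF subset_UNIV finV] in \<open>simp_all, blast\<close>)
qed

end


lemma bij_betw_restrict_pred:
  assumes "bij_betw f A B" "\<And>a. a \<in> A \<Longrightarrow> Q (f a) \<longleftrightarrow> P a"
  shows "bij_betw f {a\<in>A. P a} {b\<in>B. Q b}"
  using assms unfolding bij_betw_def inj_on_def by auto

locale pair = XF: xs scale Basis N F Fb + XG: xs scale Basis N G Gb
  for scale :: "'a::{field,finite} \<Rightarrow> 'v::ab_group_add \<Rightarrow> 'v" and Basis N F Fb G Gb +
  fixes \<psi> :: "'v \<Rightarrow> 'v"
  assumes iso: "matroid_iso scale \<psi> Fb Gb" and FG: "\<psi> ` F = G"
begin

lemma bij: "bij_betw \<psi> Fb Gb" using iso unfolding matroid_iso_def by simp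

lemma FFb: "F \<subseteq> Fb" using XF.ef unfolding is_extended_family_def by simp

lemma inv1: "x \<in> Fb \<Longrightarrow> inv_into Fb \<psi> (\<psi> x) = x"
  using bij by (simp add: bij_betw_def inv_into_f_f)

lemma inv2: "y \<in> Gb \<Longrightarrow> \<psi> (inv_into Fb \<psi> y) = y"
  using bij by (simp add: bij_betw_def f_inv_into_f)

lemma imgimg: "S \<subseteq> Fb \<Longrightarrow> inv_into Fb \<psi> ` \<psi> ` S = S"
  using inv1 by (force simp: image_image)

lemma spanD: "x \<in> Fb \<Longrightarrow> S \<subseteq> Fb \<Longrightarrow> x \<in> XF.span S \<Longrightarrow> \<psi> x \<in> XF.span (\<psi> ` S)"
  using XF.iso_span[OF iso] by blast

lemma rev: "pair scale Basis N G Gb F Fb (inv_into Fb \<psi>)"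
proof -
  have "inv_into Fb \<psi> ` G = F" using FG imgimg[OF FFb] by simp
  moreover have "matroid_iso scale (inv_into Fb \<psi>) Gb Fb" by (rule XF.iso_inv[OF iso])
  ultimately show ?thesis
    by (intro pair.intro pair_axioms.intro) (simp_all add: XF.xs_axioms XG.xs_axioms)
qed

lemma span_iff: "x \<in> Fb \<Longrightarrow> S \<subseteq> Fb \<Longrightarrow> x \<in> XF.span S \<longleftrightarrow> \<psi> x \<in> XF.span (\<psi> ` S)"
proof
  assume "x \<in> Fb" "S \<subseteq> Fb" "x \<in> XF.span S" thus "\<psi> x \<in> XF.span (\<psi> ` S)" by (rule spanD)
next
  assume x: "x \<in> Fb" and S: "S \<subseteq> Fb" and y: "\<psi> x \<in> XF.span (\<psi> ` S)"
  interpret R: pair scale Basis N G Gb F Fb "inv_into Fb \<psi>" by (rule rev)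
  have "\<psi> x \<in> Gb" "\<psi> ` S \<subseteq> Gb" using x S bij by (auto simp: bij_betw_def)
  from R.spanD[OF this y] show "x \<in> XF.span S" using inv1[OF x] imgimg[OF S] by simp
qed

lemma Lat_map: assumes "T \<in> XF.Lat" shows "\<psi> ` T \<in> XG.Lat"
proof -
  obtain \<I> where I: "\<I> \<subseteq> Pow F" "T = Fb \<inter> \<Inter>(XF.span ` \<I>)" using assms unfolding XF.Lat_def by blast
  have IFb: "I \<subseteq> Fb" if "I \<in> \<I>" for I using I(1) that FFb by blast
  have "\<psi> ` T = Gb \<inter> \<Inter>(XF.span ` ((`) \<psi> ` \<I>))"
  proof (rule set_eqI)
    fix y
    show "y \<in> \<psi> ` T \<longleftrightarrow> y \<in> Gb \<inter> \<Inter>(XF.span ` ((`) \<psi> ` \<I>))"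
    proof
      assume "y \<in> \<psi> ` T"
      then obtain x where x: "x \<in> T" "y = \<psi> x" by blast
      have "x \<in> Fb" using x I by blast
      hence "y \<in> Gb" using x bij by (auto simp: bij_betw_def)
      moreover have "y \<in> XF.span (\<psi> ` I)" if "I \<in> \<I>" for I
        using spanD[OF \<open>x \<in> Fb\<close> IFb[OF that]] x I that by blast
      ultimately show "y \<in> Gb \<inter> \<Inter>(XF.span ` ((`) \<psi> ` \<I>))" by blast
    next
      assume y: "y \<in> Gb \<inter> \<Inter>(XF.span ` ((`) \<psi> ` \<I>))"
      define x where "x = inv_into Fb \<psi> y"
      have xF: "x \<in> Fb" using y bij unfolding x_def by (auto simp: bij_betw_def inv_into_into)
      have yx: "y = \<psi> x" using inv2 y unfolding x_def by auto
      have "x \<in> XF.span I" if "I \<in> \<I>" for I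
        using span_iff[OF xF IFb[OF that]] y yx that by blast
      hence "x \<in> T" using I xF by blast
      thus "y \<in> \<psi> ` T" using yx by blast
    qed
  qed
  moreover have "(`) \<psi> ` \<I> \<subseteq> Pow G" using I(1) FG by blast
  ultimately show ?thesis unfolding XG.Lat_def by blast
qed

lemma wT_eq: assumes T: "T \<subseteq> Fb" shows "XG.wT (\<psi> ` T) = XF.wT T"
proof -
  have "(\<exists>J. J \<subseteq> G \<and> finite J \<and> card J = n \<and> \<psi> ` T \<subseteq> XF.span J) \<longleftrightarrow>
        (\<exists>I. I \<subseteq> F \<and> finite I \<and> card I = n \<and> T \<subseteq> XF.span I)" for n
  proof
    assume "\<exists>J. J \<subseteq> G \<and> finite J \<and> card J = n \<and> \<psi> ` T \<subseteq> XF.span J"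
    then obtain J where J: "J \<subseteq> G" "finite J" "card J = n" "\<psi> ` T \<subseteq> XF.span J" by blast
    define I where "I = inv_into Fb \<psi> ` J"
    have IF: "I \<subseteq> F" unfolding I_def using J(1) FG imgimg[OF FFb] by blast
    have JGb: "J \<subseteq> Gb" using J(1) FG FFb bij unfolding bij_betw_def by blast
    have "(\<lambda>y. \<psi> (inv_into Fb \<psi> y)) ` J = (\<lambda>y. y) ` J" using inv2 JGb by (intro image_cong) auto
    hence JI: "\<psi> ` I = J" unfolding I_def by (simp add: image_image)
    have "inj_on \<psi> I" using bij IF FFb by (auto simp: bij_betw_def intro: inj_on_subset)
    hence cI: "card I = n" using JI J(3) card_image by metis
    have "T \<subseteq> XF.span I"
    proof
      fix x assume "x \<in> T"
      hence "\<psi> x \<in> XF.span (\<psi> ` I)" using J(4) JI by blast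
      thus "x \<in> XF.span I" using span_iff[of x I] \<open>x \<in> T\<close> T IF FFb by blast
    qed
    thus "\<exists>I. I \<subseteq> F \<and> finite I \<and> card I = n \<and> T \<subseteq> XF.span I"
      using IF cI J(2) JI by (metis finite_imageD \<open>inj_on \<psi> I\<close>)
  next
    assume "\<exists>I. I \<subseteq> F \<and> finite I \<and> card I = n \<and> T \<subseteq> XF.span I"
    then obtain I where I: "I \<subseteq> F" "finite I" "card I = n" "T \<subseteq> XF.span I" by blast
    have "inj_on \<psi> I" using bij I(1) FFb by (auto simp: bij_betw_def intro: inj_on_subset)
    hence "card (\<psi> ` I) = n" using I(3) card_image by metis
    moreover have "\<psi> ` T \<subseteq> XF.span (\<psi> ` I)" using spanD I(1,4) T FFb by blast
    ultimately show "\<exists>J. J \<subseteq> G \<and> finite J \<and> card J = n \<and> \<psi> ` T \<subseteq> XF.span J"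
      using I FG by (intro exI[where x="\<psi> ` I"]) auto
  qed
  thus ?thesis unfolding XF.wT_def XG.wT_def by simp
qed

lemma card_span_eq: assumes T: "T \<subseteq> Fb" shows "card (XF.span (\<psi> ` T)) = card (XF.span T)"
proof -
  obtain J where J: "J \<subseteq> T" "XF.independent J" "T \<subseteq> XF.span J"
    using XF.maximal_independent_subset[of T] by blast
  have sJ: "XF.span T = XF.span J" using J by (metis XF.span_mono XF.span_minimal XF.subspace_span subset_antisym)
  have JFb: "J \<subseteq> Fb" using J T by blast
  have fJ: "finite J" using XF.finFb JFb finite_subset by blast
  have iJ': "XF.independent (\<psi> ` J)"
    using iso JFb J(2) unfolding matroid_iso_def lin_indep_def by blast
  have "\<psi> ` T \<subseteq> XF.span (\<psi> ` J)" using spanD J(3) T JFb by blast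
  moreover have "\<psi> ` J \<subseteq> \<psi> ` T" using J by blast
  ultimately have sJ': "XF.span (\<psi> ` T) = XF.span (\<psi> ` J)"
    by (metis XF.span_mono XF.span_minimal XF.subspace_span subset_antisym)
  have inj: "inj_on \<psi> J" using bij JFb by (auto simp: bij_betw_def intro: inj_on_subset)
  have "card (XF.span J) = card (XF.span (\<psi> ` J))"
    using XF.card_span_indep[OF finite_UNIV fJ J(2)] XF.card_span_indep[OF finite_UNIV finite_imageI[OF fJ] iJ']
      card_image[OF inj] by simp
  thus ?thesis using sJ sJ' by simp
qed

end



context pair begin

lemma img_sub: "A \<subseteq> Fb \<Longrightarrow> B \<subseteq> Fb \<Longrightarrow> \<psi> ` A \<subseteq> \<psi> ` B \<longleftrightarrow> A \<subseteq> B"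
proof
  assume A: "A \<subseteq> Fb" and B: "B \<subseteq> Fb" and s: "\<psi> ` A \<subseteq> \<psi> ` B"
  have "inv_into Fb \<psi> ` \<psi> ` A \<subseteq> inv_into Fb \<psi> ` \<psi> ` B" using s by (rule image_mono)
  thus "A \<subseteq> B" using imgimg[OF A] imgimg[OF B] by simp
qed (rule image_mono)

lemma img_psub: "A \<subseteq> Fb \<Longrightarrow> B \<subseteq> Fb \<Longrightarrow> \<psi> ` A \<subset> \<psi> ` B \<longleftrightarrow> A \<subset> B"
  using img_sub[of A B] img_sub[of B A] by (auto simp: less_le)

lemma Lat_bij: "bij_betw ((`) \<psi>) XF.Lat XG.Lat"
proof -
  interpret R: pair scale Basis N G Gb F Fb "inv_into Fb \<psi>" by (rule rev)
  show ?thesis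
  proof (rule bij_betw_byWitness[where f'="(`) (inv_into Fb \<psi>)"])
    show "\<forall>a\<in>XF.Lat. inv_into Fb \<psi> ` \<psi> ` a = a" using imgimg XF.Lat_sub by blast
    show "\<forall>a'\<in>XG.Lat. \<psi> ` inv_into Fb \<psi> ` a' = a'"
    proof
      fix a' assume "a' \<in> XG.Lat"
      hence a': "a' \<subseteq> Gb" by (rule XG.Lat_sub)
      have "(\<lambda>y. \<psi> (inv_into Fb \<psi> y)) ` a' = (\<lambda>y. y) ` a'" using inv2 a' by (intro image_cong) auto
      thus "\<psi> ` inv_into Fb \<psi> ` a' = a'" by (simp add: image_image)
    qed
    show "(`) \<psi> ` XF.Lat \<subseteq> XG.Lat" using Lat_map by blast
    show "(`) (inv_into Fb \<psi>) ` XG.Lat \<subseteq> XF.Lat" using R.Lat_map by blast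
  qed
qed

lemma c_eq: "T \<in> XF.Lat \<Longrightarrow> card {v. XF.Tv v = T} = card {v. XG.Tv v = \<psi> ` T}"
proof (induction T rule: measure_induct_rule[where f=card])
  case (less T)
  define A where "A = {T'\<in>XF.Lat. T' \<subset> T}"
  define B where "B = {T''\<in>XG.Lat. T'' \<subset> \<psi> ` T}"
  have TFb: "T \<subseteq> Fb" using less.prems by (rule XF.Lat_sub)
  have fT: "finite T" using TFb XF.finFb finite_subset by blast
  have TG: "\<psi> ` T \<in> XG.Lat" using less.prems by (rule Lat_map)
  have e1: "{T'\<in>XF.Lat. T' \<subseteq> T} = insert T A" using less.prems by (auto simp: A_def)
  have e2: "{T'\<in>XG.Lat. T' \<subseteq> \<psi> ` T} = insert (\<psi> ` T) B" using TG by (auto simp: B_def)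
  have fA: "finite A" unfolding A_def using XF.finLat by simp
  have fB: "finite B" unfolding B_def using XG.finLat by simp
  have s1: "card (XF.span T) = card {v. XF.Tv v = T} + (\<Sum>T'\<in>A. card {v. XF.Tv v = T'})"
    using XF.card_span_Lat[OF less.prems] unfolding e1 using fA by (simp add: A_def)
  have s2: "card (XF.span (\<psi> ` T)) = card {v. XG.Tv v = \<psi> ` T} + (\<Sum>T'\<in>B. card {v. XG.Tv v = T'})"
    using XG.card_span_Lat[OF TG] unfolding e2 using fB by (simp add: B_def)
  have bAB: "bij_betw ((`) \<psi>) A B"
    unfolding A_def B_def
    by (rule bij_betw_restrict_pred[OF Lat_bij], rule img_psub[OF XF.Lat_sub TFb])
  have "(\<Sum>T'\<in>A. card {v. XF.Tv v = T'}) = (\<Sum>T'\<in>A. card {v. XG.Tv v = \<psi> ` T'})"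
  proof (rule sum.cong)
    fix T' assume "T' \<in> A"
    hence h1: "T' \<in> XF.Lat" and h2: "card T' < card T" using fT psubset_card_mono unfolding A_def by auto
    from h2 h1 show "card {v. XF.Tv v = T'} = card {v. XG.Tv v = \<psi> ` T'}" by (rule less.IH)
  qed simp
  also have "\<dots> = (\<Sum>T'\<in>B. card {v. XG.Tv v = T'})"
    by (rule sum.reindex_bij_betw[OF bAB])
  finally have "(\<Sum>T'\<in>A. card {v. XF.Tv v = T'}) = (\<Sum>T'\<in>B. card {v. XG.Tv v = T'})" .
  moreover have "card (XF.span (\<psi> ` T)) = card (XF.span T)" by (rule card_span_eq[OF TFb])
  ultimately show ?case using s1 s2 by simp
qed

lemma sphere_eq: "card (sphere0 scale F t) = card (sphere0 scale G t)"
proof -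
  have bW: "bij_betw ((`) \<psi>) {T\<in>XF.Lat. XF.wT T = t} {T\<in>XG.Lat. XG.wT T = t}"
    by (rule bij_betw_restrict_pred[OF Lat_bij]) (simp add: wT_eq XF.Lat_sub)
  have "card (sphere0 scale F t) = (\<Sum>T\<in>{T\<in>XF.Lat. XF.wT T = t}. card {v. XF.Tv v = T})"
    by (rule XF.card_sphere)
  also have "\<dots> = (\<Sum>T\<in>{T\<in>XF.Lat. XF.wT T = t}. card {v. XG.Tv v = \<psi> ` T})"
    using c_eq by (intro sum.cong) auto
  also have "\<dots> = (\<Sum>T\<in>{T\<in>XG.Lat. XG.wT T = t}. card {v. XG.Tv v = T})"
    by (rule sum.reindex_bij_betw[OF bW])
  also have "\<dots> = card (sphere0 scale G t)" by (rule XG.card_sphere[symmetric])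
  finally show ?thesis .
qed

end

theorem proposition6p7:
  fixes scale :: "'a::{field,finite} \<Rightarrow> 'v::ab_group_add \<Rightarrow> 'v"
    and N :: nat and F G Fb Gb :: "'v set" and \<psi> :: "'v \<Rightarrow> 'v"
  assumes "vector_space scale"
    and "\<exists>B. finite B \<and> lin_indep scale B \<and> module.span scale B = UNIV \<and> card B = N"
    and "spanning_family scale F" and "spanning_family scale G"
    and "is_extended_family scale N F Fb" and "is_extended_family scale N G Gb"
    and "matroid_iso scale \<psi> Fb Gb" and "\<psi> ` F = G"
  shows "\<forall>t::nat. card (sphere0 scale F t) = card (sphere0 scale G t)"
proof
  fix t :: nat
  obtain B where B: "finite B" "lin_indep scale B" "module.span scale B = UNIV" "card B = N"
    using assms(2) by blast
  have fd: "finite_dimensional_vector_space scale B"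
    using assms(1) B unfolding lin_indep_def
    by (intro finite_dimensional_vector_space.intro finite_dimensional_vector_space_axioms.intro) auto
  have xF: "xs scale B N F Fb"
    using fd B(4) assms(3,5) by (intro xs.intro xs_axioms.intro) auto
  have xG: "xs scale B N G Gb"
    using fd B(4) assms(4,6) by (intro xs.intro xs_axioms.intro) auto
  have "pair scale B N F Fb G Gb \<psi>"
    using xF xG assms(7,8) by (intro pair.intro pair_axioms.intro) auto
  thus "card (sphere0 scale F t) = card (sphere0 scale G t)" by (rule pair.sphere_eq)
qed


end
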